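(* Let $\psi,\phi\in \mathbf{\Psi}_n$, $m:=\min_{t\in\Omega_n}\frac{\psi(t)}{\phi(t)}$, $M:=\max_{t\in\Omega_n}\frac{\psi(t)}{\phi(t)}$, and suppose $C_{\rm NJ}(|\!|\!|\cdot|\!|\!|_\phi)=C_{\rm NJ}(|\!|\!|\cdot|\!|\!|_{\phi^*})=1$. Then: (i) if $\psi\ge\phi$, then $C_{\rm NJ}(|\!|\!|\cdot|\!|\!|_\psi)\le M^2$ and $C_{\rm NJ}(|\!|\!|\cdot|\!|\!|_{\psi^*})\le M^2$; (ii) if $\psi\le\phi$, then $C_{\rm NJ}(|\!|\!|\cdot|\!|\!|_\psi)\le\frac{1}{m^2}$ and $C_{\rm NJ}(|\!|\!|\cdot|\!|\!|_{\psi^*})\le\frac{1}{m^2}$; (iii) if $n=2$, then the inequalities in (i) and (ii) hold as equalities.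
   Context: Let $(X,\|\cdot\|)$ be a normed vector space, $n\ge2$. $\Omega_n:=\{t\in\mathbb{R}^n\mid t_i\ge0,\ \sum_i t_i=1\}$, $\Omega_n^\circ:=\{t\in\Omega_n\mid t_i<1\ \forall i\}$. $\mathbf{\Psi}_n$ is the class of convex continuous $\psi:\Omega_n\to\mathbb{R}$ with (B1) $\psi(\mathbf{e}_i)=1$ for all standard unit vectors $\mathbf{e}_i$ and (B2) $\psi(t)\ge(1-t_i)\psi\big(\frac{t_1}{1-t_i},\ldots,\frac{t_{i-1}}{1-t_i},0,\frac{t_{i+1}}{1-t_i},\ldots,\frac{t_n}{1-t_i}\big)$ for all $t\in\Omega_n^\circ$, $i=1,\ldots,n$. For $\psi\in\mathbf{\Psi}_n$, $|\!|\!|x|\!|\!|_\psi:=\big(\sum_{i}\|x_i\|\big)\,\psi\big(\frac{\|x_1\|}{\sum_{i}\|x_i\|},\ldots,\frac{\|x_n\|}{\sum_{i}\|x_i\|}\big)$ for $0\ne x\in X^n$, $|\!|\!|0|\!|\!|_\psi:=0$; $\psi^*(s):=\max_{t\in\Omega_n}\frac{\langle t,s\rangle}{\psi(t)}$ and $|\!|\!|\cdot|\!|\!|_{\psi^*}$ is the dual norm of $|\!|\!|\cdot|\!|\!|_\psi$. $\psi\ge\phi$ means pointwise on $\Omega_n$. For a norm $N$ on a vector space $Y$, $C_{\rm NJ}(N):=\sup\Big\{\frac{N(x+y)^2+N(x-y)^2}{2(N(x)^2+N(y)^2)}\ \Big|\ x,y\in Y,\ N(x)+N(y)>0\Big\}$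 (von Neumann–Jordan constant). *)

theory Defs
  imports "HOL-Analysis.Analysis"
begin

text \<open>The simplex Omega_n, indexed by a finite type 'n with CARD('n) = n.\<close>
definition Omega :: "(real^'n::finite) set" where
  "Omega = {t. (\<forall>i. 0 \<le> t$i) \<and> (\<Sum>i\<in>UNIV. t$i) = 1}"

definition Omega_int :: "(real^'n::finite) set" where
  "Omega_int = {t \<in> Omega. \<forall>i. t$i < 1}"

definition Psi :: "((real^'n::finite) \<Rightarrow> real) set" where
  "Psi = {psi. convex_on Omega psi \<and> continuous_on Omega psi
     \<and> (\<forall>i. psi (axis i 1) = 1)
     \<and> (\<forall>t\<in>Omega_int. \<forall>i.
          psi t \<ge> (1 - t$i) * psi (\<chi> j. if j = i then 0 else t$j / (1 - t$i)))}"

definition psi_norm :: "((real^'n::finite) \<Rightarrow> real) \<Rightarrow> ('a::real_normed_vector)^'n \<Rightarrow> real" where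
  "psi_norm psi x = (if x = 0 then 0 else
     (\<Sum>i\<in>UNIV. norm (x$i)) * psi (\<chi> i. norm (x$i) / (\<Sum>j\<in>UNIV. norm (x$j))))"

text \<open>The dual function psi^* (the max is attained; written as a supremum).\<close>
definition psi_star :: "((real^'n::finite) \<Rightarrow> real) \<Rightarrow> (real^'n) \<Rightarrow> real" where
  "psi_star psi s = (SUP t\<in>Omega. (t \<bullet> s) / psi t)"

definition CNJ :: "('b::ab_group_add \<Rightarrow> real) \<Rightarrow> real" where
  "CNJ N = Sup {((N (x + y))^2 + (N (x - y))^2) / (2 * ((N x)^2 + (N y)^2)) | x y. N x + N y > 0}"

end

theory Submission
  imports Defs
begin


lemma Omega_D:
  assumes "t \<in> (Omega :: (real^'n::finite) set)"
  shows "0 \<le> t$i" "t$i \<le> 1" "(\<Sum>i\<in>UNIV. t$i) = 1"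
proof -
  show "0 \<le> t$i" "(\<Sum>i\<in>UNIV. t$i) = 1" using assms by (auto simp: Omega_def)
  have "t$i \<le> (\<Sum>i\<in>UNIV. t$i)"
    by (rule member_le_sum) (use assms in \<open>auto simp: Omega_def\<close>)
  then show "t$i \<le> 1" using assms by (auto simp: Omega_def)
qed

lemma axis_Omega: "(axis i 1 :: real^'n::finite) \<in> Omega"
  by (auto simp: Omega_def axis_def sum.delta)

lemma Omega_big:
  assumes "t \<in> (Omega :: (real^'n::finite) set)"
  shows "\<exists>j. 1 / real CARD('n) \<le> t$j"
proof (rule ccontr)
  assume "\<not> ?thesis"
  then have "\<forall>j. t$j < 1 / real CARD('n)" by (auto simp: not_le)
  then have "(\<Sum>i\<in>UNIV. t$i) < (\<Sum>i\<in>(UNIV::'n set). 1 / real CARD('n))"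
    by (intro sum_strict_mono) auto
  then show False using Omega_D(3)[OF assms] by simp
qed

lemma Omega_compact: "compact (Omega :: (real^'n::finite) set)"
proof -
  have "Omega = {t::real^'n. \<forall>i. 0 \<le> t$i} \<inter> {t. (\<Sum>i\<in>UNIV. t$i) = 1}"
    by (auto simp: Omega_def)
  moreover have "closed \<dots>"
    by (intro closed_Int closed_positive_orthant closed_Collect_eq continuous_intros)
  moreover have "bounded (Omega :: (real^'n::finite) set)"
  proof -
    have "norm t \<le> real CARD('n)" if "t \<in> Omega" for t :: "real^'n"
    proof -
      have "norm t \<le> (\<Sum>i\<in>UNIV. \<bar>t$i\<bar>)" by (rule norm_le_l1_cart)
      also have "\<dots> \<le> (\<Sum>i\<in>(UNIV::'n set). 1)"
        by (intro sum_mono) (use Omega_D[OF that] in auto)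
      finally show ?thesis by simp
    qed
    then show ?thesis unfolding bounded_iff by blast
  qed
  ultimately show ?thesis by (metis bounded_closed_imp_seq_compact compact_eq_seq_compact_metric)
qed

lemma Omega_one:
  assumes "t \<in> (Omega :: (real^'n::finite) set)" "t$i = 1"
  shows "t = axis i 1"
proof -
  have "(\<Sum>k\<in>UNIV. t$k) = t$i + (\<Sum>k\<in>UNIV-{i}. t$k)"
    by (simp add: sum.remove)
  then have "(\<Sum>k\<in>UNIV-{i}. t$k) = 0" using assms Omega_D(3)[OF assms(1)] by simp
  then have "\<forall>k\<in>UNIV-{i}. t$k = 0"
    by (subst (asm) sum_nonneg_eq_0_iff) (use Omega_D(1)[OF assms(1)] in auto)
  then show ?thesis using assms(2) by (auto simp: axis_def vec_eq_iff)
qed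

lemma Psi_D:
  assumes "psi \<in> Psi"
  shows "convex_on Omega psi" "continuous_on Omega psi" "psi (axis i 1) = 1"
    "t \<in> Omega_int \<Longrightarrow> psi t \<ge> (1 - t$i) * psi (\<chi> j. if j = i then 0 else t$j / (1 - t$i))"
  using assms by (auto simp: Psi_def)

lemma Psi_ge_comp:
  assumes psi: "psi \<in> Psi"
  shows "t \<in> Omega \<Longrightarrow> t$j \<le> psi t"
proof (induction "card {k. t$k \<noteq> 0}" arbitrary: t j rule: less_induct)
  case less
  note tO = less.prems
  show ?case
  proof (cases "\<exists>i. i \<noteq> j \<and> t$i \<noteq> 0")
    case False
    then have "(\<Sum>k\<in>UNIV. t$k) = t$j + (\<Sum>k\<in>UNIV-{j}. t$k)"
      by (simp add: sum.remove)
    also have "(\<Sum>k\<in>UNIV-{j}. t$k) = 0" using False by (intro sum.neutral) auto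
    finally have "t$j = 1" using Omega_D(3)[OF tO] by simp
    then have "t = axis j 1" by (rule Omega_one[OF tO])
    then show ?thesis using Psi_D(3)[OF psi] by (simp add: axis_def)
  next
    case True
    then obtain i where ij: "i \<noteq> j" and ti0: "t$i \<noteq> 0" by auto
    have tipos: "t$i > 0" using ti0 Omega_D(1)[OF tO, of i] by simp
    show ?thesis
    proof (cases "t$i = 1")
      case True
      then have "t = axis i 1" by (rule Omega_one[OF tO])
      then show ?thesis using Psi_D(3)[OF psi, of i] ij by (simp add: axis_def)
    next
      case False
      then have til: "t$i < 1" using Omega_D(2)[OF tO, of i] by simp
      have sumi: "(\<Sum>k\<in>UNIV. t$k) = t$i + (\<Sum>k\<in>UNIV-{i}. t$k)"
        by (simp add: sum.remove)
      have rest: "(\<Sum>k\<in>UNIV-{i}. t$k) = 1 - t$i" using sumi Omega_D(3)[OF tO] by simp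
      have tk: "t$k < 1" for k
      proof (cases "k = i")
        case True then show ?thesis using til by simp
      next
        case False
        have "t$k \<le> (\<Sum>k\<in>UNIV-{i}. t$k)"
          by (rule member_le_sum) (use False Omega_D(1)[OF tO] in auto)
        then show ?thesis using rest tipos by simp
      qed
      have tint: "t \<in> Omega_int" using tO tk by (auto simp: Omega_int_def)
      define t' where "t' = (\<chi> k. if k = i then 0 else t$k / (1 - t$i))"
      have t'O: "t' \<in> Omega"
      proof -
        have "(\<Sum>k\<in>UNIV. t'$k) = t'$i + (\<Sum>k\<in>UNIV-{i}. t'$k)"
          by (simp add: sum.remove)
        also have "(\<Sum>k\<in>UNIV-{i}. t'$k) = (\<Sum>k\<in>UNIV-{i}. t$k / (1 - t$i))"
          by (intro sum.cong) (auto simp: t'_def)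
        also have "\<dots> = (\<Sum>k\<in>UNIV-{i}. t$k) / (1 - t$i)"
          by (simp add: sum_divide_distrib)
        finally have "(\<Sum>k\<in>UNIV. t'$k) = 1" using rest til by (simp add: t'_def)
        moreover have "\<forall>k. 0 \<le> t'$k" using Omega_D(1)[OF tO] til by (auto simp: t'_def)
        ultimately show ?thesis by (auto simp: Omega_def)
      qed
      have supp: "{k. t'$k \<noteq> 0} = {k. t$k \<noteq> 0} - {i}"
        using til by (auto simp: t'_def)
      have "card {k. t'$k \<noteq> 0} < card {k. t$k \<noteq> 0}"
        unfolding supp using ti0 by (intro card_Diff1_less) auto
      then have IH: "t'$j \<le> psi t'" using less.hyps t'O by blast
      have "t$j = (1 - t$i) * t'$j" using ij til by (simp add: t'_def)
      also have "\<dots> \<le> (1 - t$i) * psi t'" using IH til by (intro mult_left_mono) auto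
      also have "\<dots> \<le> psi t" using Psi_D(4)[OF psi tint, of i] by (simp add: t'_def)
      finally show ?thesis .
    qed
  qed
qed

lemma Psi_pos:
  assumes "psi \<in> Psi" "t \<in> (Omega :: (real^'n::finite) set)"
  shows "1 / real CARD('n) \<le> psi t" "0 < psi t"
proof -
  obtain j where "1 / real CARD('n) \<le> t$j" using Omega_big[OF assms(2)] by blast
  then show "1 / real CARD('n) \<le> psi t" using Psi_ge_comp[OF assms] by (meson order_trans)
  then show "0 < psi t" by (smt (verit) of_nat_0_less_iff zero_less_card_finite zero_less_divide_1_iff)
qed

lemma Psi_le1:
  assumes psi: "psi \<in> Psi" and tO: "t \<in> (Omega :: (real^'n::finite) set)"
  shows "psi t \<le> 1"
proof -
  have "t = (\<Sum>i\<in>UNIV. t$i *\<^sub>R axis i 1)"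
    by (simp add: vec_eq_iff axis_def sum_component if_distrib cong: if_cong)
  then have "psi t = psi (\<Sum>i\<in>UNIV. t$i *\<^sub>R axis i 1)" by simp
  also have "\<dots> \<le> (\<Sum>i\<in>UNIV. t$i * psi (axis i 1))"
    by (rule convex_on_sum[OF _ _ Psi_D(1)[OF psi]]) (use Omega_D[OF tO] axis_Omega in auto)
  also have "\<dots> = 1" using Psi_D(3)[OF psi] Omega_D(3)[OF tO] by simp
  finally show ?thesis .
qed

lemma inner_Omega_bounds:
  assumes "t \<in> (Omega :: (real^'n::finite) set)" "s \<in> Omega"
  shows "0 \<le> t \<bullet> s" "t \<bullet> s \<le> 1"
proof -
  have e: "t \<bullet> s = (\<Sum>i\<in>UNIV. t$i * s$i)" by (simp add: inner_vec_def)
  show "0 \<le> t \<bullet> s" unfolding e using Omega_D(1)[OF assms(1)] Omega_D(1)[OF assms(2)]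
    by (intro sum_nonneg) auto
  have "(\<Sum>i\<in>UNIV. t$i * s$i) \<le> (\<Sum>i\<in>UNIV. s$i)"
    by (intro sum_mono) (use Omega_D[OF assms(1)] Omega_D[OF assms(2)] in \<open>auto intro: mult_left_le_one_le\<close>)
  then show "t \<bullet> s \<le> 1" unfolding e using Omega_D(3)[OF assms(2)] by simp
qed

lemma psi_star_bdd:
  assumes "psi \<in> Psi" "s \<in> (Omega :: (real^'n::finite) set)"
  shows "bdd_above ((\<lambda>t. (t \<bullet> s) / psi t) ` Omega)"
proof -
  have "(t \<bullet> s) / psi t \<le> real CARD('n)" if "t \<in> Omega" for t
  proof -
    have p: "1 / real CARD('n) \<le> psi t" "0 < psi t" using Psi_pos[OF assms(1) that] by auto
    have "(t \<bullet> s) / psi t \<le> 1 / psi t"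
      using inner_Omega_bounds[OF that assms(2)] p by (intro divide_right_mono) auto
    also have "\<dots> \<le> real CARD('n)" using p
      by (simp add: divide_le_eq mult.commute pos_divide_le_eq)
    finally show ?thesis .
  qed
  then show ?thesis by (intro bdd_aboveI2) auto
qed

lemma psi_star_ge:
  assumes "psi \<in> Psi" "s \<in> (Omega :: (real^'n::finite) set)" "t \<in> Omega"
  shows "(t \<bullet> s) / psi t \<le> psi_star psi s"
  unfolding psi_star_def by (rule cSUP_upper[OF assms(3) psi_star_bdd[OF assms(1,2)]])

lemma psi_star_le:
  assumes "psi \<in> Psi" "s \<in> (Omega :: (real^'n::finite) set)"
    and "\<And>t. t \<in> Omega \<Longrightarrow> (t \<bullet> s) / psi t \<le> b"
  shows "psi_star psi s \<le> b"
  unfolding psi_star_def by (rule cSUP_least) (use assms axis_Omega in auto)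

lemma psi_star_comp:
  assumes "psi \<in> Psi" "s \<in> (Omega :: (real^'n::finite) set)"
  shows "s$j \<le> psi_star psi s"
  using psi_star_ge[OF assms axis_Omega[of j]] Psi_D(3)[OF assms(1)]
  by (simp add: inner_axis')

lemma psi_star_bounds:
  assumes "psi \<in> Psi" "s \<in> (Omega :: (real^'n::finite) set)"
  shows "1 / real CARD('n) \<le> psi_star psi s" "psi_star psi s \<le> real CARD('n)"
proof -
  obtain j where "1 / real CARD('n) \<le> s$j" using Omega_big[OF assms(2)] by blast
  then show "1 / real CARD('n) \<le> psi_star psi s" using psi_star_comp[OF assms] by (meson order_trans)
  show "psi_star psi s \<le> real CARD('n)"
  proof (rule psi_star_le[OF assms])
    fix t :: "real^'n" assume that: "t \<in> Omega"
    have p: "1 / real CARD('n) \<le> psi t" "0 < psi t" using Psi_pos[OF assms(1) that] by auto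
    have "(t \<bullet> s) / psi t \<le> 1 / psi t"
      using inner_Omega_bounds[OF that assms(2)] p by (intro divide_right_mono) auto
    also have "\<dots> \<le> real CARD('n)" using p
      by (simp add: divide_le_eq mult.commute pos_divide_le_eq)
    finally show "(t \<bullet> s) / psi t \<le> real CARD('n)" .
  qed
qed

lemma psi_star_axis:
  assumes "psi \<in> Psi"
  shows "psi_star psi (axis i 1 :: real^'n::finite) = 1"
proof (rule antisym)
  show "1 \<le> psi_star psi (axis i 1 :: real^'n::finite)"
    using psi_star_comp[OF assms axis_Omega, of i i] by simp
  show "psi_star psi (axis i 1 :: real^'n::finite) \<le> 1"
  proof (rule psi_star_le[OF assms axis_Omega])
    fix t :: "real^'n" assume t: "t \<in> Omega"
    have "t$i \<le> psi t" "0 < psi t" using Psi_ge_comp[OF assms t] Psi_pos[OF assms t] by auto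
    then show "t \<bullet> axis i 1 / psi t \<le> 1" by (simp add: inner_axis)
  qed
qed

lemma psi_star_mono:
  assumes psi: "psi \<in> Psi" and phi: "phi \<in> Psi" and s: "s \<in> (Omega :: (real^'n::finite) set)"
    and a: "a > 0" and le: "\<And>t. t \<in> Omega \<Longrightarrow> a * phi t \<le> psi t"
  shows "a * psi_star psi s \<le> psi_star phi s"
proof -
  have "psi_star psi s \<le> psi_star phi s / a"
  proof (rule psi_star_le[OF psi s])
    fix t :: "real^'n" assume t: "t \<in> Omega"
    have p: "0 < phi t" "0 < psi t" using Psi_pos[OF phi t] Psi_pos[OF psi t] by auto
    have ts: "0 \<le> t \<bullet> s" using inner_Omega_bounds[OF t s] by simp
    have "(t \<bullet> s) / psi t \<le> (t \<bullet> s) / (a * phi t)"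
      using le[OF t] p a ts by (intro divide_left_mono) auto
    also have "\<dots> = ((t \<bullet> s) / phi t) / a" by simp
    also have "\<dots> \<le> psi_star phi s / a"
      using psi_star_ge[OF phi s t] a by (intro divide_right_mono) auto
    finally show "(t \<bullet> s) / psi t \<le> psi_star phi s / a" .
  qed
  then show ?thesis using a by (simp add: field_simps)
qed

definition L1 :: "('a::real_normed_vector)^'n::finite \<Rightarrow> real" where
  "L1 x = (\<Sum>i\<in>UNIV. norm (x$i))"

definition nrm :: "('a::real_normed_vector)^'n::finite \<Rightarrow> real^'n" where
  "nrm x = (\<chi> i. norm (x$i) / L1 x)"

lemma L1_nonneg: "0 \<le> L1 x"
  unfolding L1_def by (intro sum_nonneg) auto

lemma L1_pos: "x \<noteq> 0 \<Longrightarrow> 0 < L1 x"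
proof -
  assume "x \<noteq> 0"
  then obtain i where "x$i \<noteq> 0" by (auto simp: vec_eq_iff)
  then have "0 < norm (x$i)" by simp
  also have "norm (x$i) \<le> L1 x" unfolding L1_def by (rule member_le_sum) auto
  finally show ?thesis .
qed

lemma L1_zero: "L1 (0 :: ('a::real_normed_vector)^'n::finite) = 0"
  by (simp add: L1_def)

lemma L1_tri: "L1 (x + y) \<le> L1 x + L1 y" "L1 (x - y) \<le> L1 x + L1 y"
  unfolding L1_def sum.distrib[symmetric]
  by (intro sum_mono; simp add: norm_triangle_ineq norm_triangle_ineq4)+

lemma nrm_Omega: "x \<noteq> 0 \<Longrightarrow> nrm x \<in> Omega"
proof -
  assume x: "x \<noteq> 0"
  have p: "0 < L1 x" using L1_pos[OF x] .
  have "(\<Sum>i\<in>UNIV. nrm x $ i) = (\<Sum>i\<in>UNIV. norm (x$i)) / L1 x"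
    by (simp add: nrm_def sum_divide_distrib)
  also have "\<dots> = 1" using p by (simp add: L1_def)
  finally show ?thesis using p by (auto simp: Omega_def nrm_def)
qed

lemma psi_norm_eq: "x \<noteq> 0 \<Longrightarrow> psi_norm F x = L1 x * F (nrm x)"
  by (simp add: psi_norm_def L1_def nrm_def)

lemma psi_norm_comp:
  assumes "\<And>t. t \<in> Omega \<Longrightarrow> a * F t \<le> G t"
  shows "a * psi_norm F x \<le> psi_norm G x"
proof (cases "x = 0")
  case True then show ?thesis by (simp add: psi_norm_def)
next
  case False
  have "a * psi_norm F x = L1 x * (a * F (nrm x))" using False by (simp add: psi_norm_eq)
  also have "\<dots> \<le> L1 x * G (nrm x)"
    using assms[OF nrm_Omega[OF False]] L1_nonneg by (intro mult_left_mono) auto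
  finally show ?thesis using False by (simp add: psi_norm_eq)
qed

lemma psi_norm_L1:
  assumes "\<And>t. t \<in> Omega \<Longrightarrow> c \<le> F t \<and> F t \<le> B"
  shows "c * L1 x \<le> psi_norm F x" "psi_norm F x \<le> B * L1 x"
proof -
  have "c * L1 x \<le> psi_norm F x \<and> psi_norm F x \<le> B * L1 x"
  proof (cases "x = 0")
    case True then show ?thesis by (simp add: psi_norm_def L1_zero)
  next
    case False
    have h: "c \<le> F (nrm x)" "F (nrm x) \<le> B" using assms[OF nrm_Omega[OF False]] by auto
    have "c * L1 x \<le> L1 x * F (nrm x)" "L1 x * F (nrm x) \<le> B * L1 x"
      using mult_right_mono[OF h(1) L1_nonneg[of x]] mult_right_mono[OF h(2) L1_nonneg[of x]]
      by (simp_all add: mult.commute)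
    then show ?thesis using False by (simp add: psi_norm_eq)
  qed
  then show "c * L1 x \<le> psi_norm F x" "psi_norm F x \<le> B * L1 x" by auto
qed

definition RNJ :: "('b::ab_group_add \<Rightarrow> real) \<Rightarrow> 'b \<Rightarrow> 'b \<Rightarrow> real" where
  "RNJ N x y = ((N (x + y))^2 + (N (x - y))^2) / (2 * ((N x)^2 + (N y)^2))"

definition SNJ :: "('b::ab_group_add \<Rightarrow> real) \<Rightarrow> real set" where
  "SNJ N = {((N (x + y))^2 + (N (x - y))^2) / (2 * ((N x)^2 + (N y)^2)) | x y. N x + N y > 0}"

lemma CNJ_SNJ: "CNJ N = Sup (SNJ N)"
  by (simp add: CNJ_def SNJ_def)

lemma RNJ_in: "N x + N y > 0 \<Longrightarrow> RNJ N x y \<in> SNJ N"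
  unfolding RNJ_def SNJ_def by blast

lemma RNJ_le_CNJ: "bdd_above (SNJ N) \<Longrightarrow> N x + N y > 0 \<Longrightarrow> RNJ N x y \<le> CNJ N"
  unfolding CNJ_SNJ by (rule cSup_upper[OF RNJ_in])

lemma sq2: "(u + v)^2 \<le> 2 * (u^2 + v^2)" for u v :: real
proof -
  have "(u+v)^2 + (u-v)^2 = 2*(u^2+v^2)" by (simp add: power2_eq_square algebra_simps)
  moreover have "0 \<le> (u-v)^2" by simp
  ultimately show ?thesis by linarith
qed

lemma SNJ_bdd_L1:
  fixes P :: "('a::real_normed_vector)^'n::finite \<Rightarrow> real"
  assumes c: "c > 0" and B: "B \<ge> 0" and lo: "\<And>x. c * L1 x \<le> P x" and hi: "\<And>x. P x \<le> B * L1 x"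
  shows "bdd_above (SNJ P)"
proof -
  have P0: "0 \<le> P x" for x using lo[of x] L1_nonneg[of x] c
    by (smt (verit) mult_nonneg_nonneg)
  have L1le: "L1 x \<le> P x / c" for x using lo[of x] c by (simp add: field_simps)
  define K where "K = B / c"
  have K0: "0 \<le> K" using B c by (simp add: K_def)
  have tri: "P z \<le> K * (P x + P y)" if "L1 z \<le> L1 x + L1 y" for x y z
  proof -
    have "P z \<le> B * (L1 x + L1 y)" using hi[of z] that B by (smt (verit) mult_left_mono)
    also have "\<dots> \<le> B * (P x / c + P y / c)" using L1le[of x] L1le[of y] B
      by (intro mult_left_mono) auto
    also have "\<dots> = K * (P x + P y)" using c by (simp add: K_def field_simps)
    finally show ?thesis .
  qed
  have sq: "(P z)^2 \<le> K^2 * (2 * ((P x)^2 + (P y)^2))" if "L1 z \<le> L1 x + L1 y" for x y z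
  proof -
    have "(P z)^2 \<le> (K * (P x + P y))^2"
      using tri[OF that] P0[of z] by (intro power_mono) auto
    also have "\<dots> = K^2 * (P x + P y)^2" by (simp add: power_mult_distrib)
    also have "\<dots> \<le> K^2 * (2 * ((P x)^2 + (P y)^2))"
      by (intro mult_left_mono sq2) auto
    finally show ?thesis .
  qed
  have "r \<le> 2 * K^2" if rS: "r \<in> SNJ P" for r
  proof -
    obtain x y where r: "r = ((P (x + y))^2 + (P (x - y))^2) / (2 * ((P x)^2 + (P y)^2))"
      and pos: "P x + P y > 0" using rS unfolding SNJ_def by blast
    have D: "0 < (P x)^2 + (P y)^2" using pos P0[of x] P0[of y]
      by (smt (verit) power2_less_0 zero_less_power2)
    have "(P (x + y))^2 + (P (x - y))^2 \<le> 2 * K^2 * (2 * ((P x)^2 + (P y)^2))"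
      using sq[OF L1_tri(1)[of x y]] sq[OF L1_tri(2)[of x y]] by simp
    then show ?thesis unfolding r using D by (simp add: divide_le_eq mult.commute mult.left_commute)
  qed
  then show ?thesis by (intro bdd_aboveI) auto
qed

lemma CNJ_upper:
  fixes N P :: "'b::ab_group_add \<Rightarrow> real"
  assumes P0: "\<And>x. 0 \<le> P x" and aN: "\<And>x. a * P x \<le> N x" and bN: "\<And>x. N x \<le> b * P x"
    and a: "a > 0" and C1: "CNJ P = 1" and bdd: "bdd_above (SNJ P)" and ex: "\<exists>x. N x > 0"
  shows "CNJ N \<le> (b/a)^2" "bdd_above (SNJ N)"
proof -
  have N0: "0 \<le> N x" for x using aN[of x] P0[of x] a by (smt (verit) mult_nonneg_nonneg)
  have main: "r \<le> (b/a)^2" if rS: "r \<in> SNJ N" for r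
  proof -
    obtain x y where r: "r = RNJ N x y" and pos: "N x + N y > 0"
      using rS unfolding SNJ_def RNJ_def by blast
    have b0: "b > 0"
    proof (rule ccontr)
      assume "\<not> b > 0"
      then have "N x \<le> 0" "N y \<le> 0" using bN[of x] bN[of y] P0[of x] P0[of y]
        by (smt (verit) mult_nonpos_nonneg)+
      then show False using pos by simp
    qed
    have Ppos: "P x + P y > 0"
    proof (rule ccontr)
      assume "\<not> P x + P y > 0"
      then have "P x = 0" "P y = 0" using P0[of x] P0[of y] by auto
      then show False using bN[of x] bN[of y] pos by simp
    qed
    have RP: "RNJ P x y \<le> 1" using RNJ_le_CNJ[OF bdd Ppos] C1 by simp
    have DP: "0 < (P x)^2 + (P y)^2" using Ppos P0[of x] P0[of y]
      by (smt (verit) power2_less_0 zero_less_power2)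
    have num: "(N (x + y))^2 + (N (x - y))^2 \<le> b^2 * ((P (x + y))^2 + (P (x - y))^2)"
    proof -
      have "(N z)^2 \<le> b^2 * (P z)^2" for z
        using power_mono[OF bN[of z] N0[of z]] by (simp add: power_mult_distrib)
      then show ?thesis by (simp add: distrib_left add_mono)
    qed
    have den: "a^2 * ((P x)^2 + (P y)^2) \<le> (N x)^2 + (N y)^2"
    proof -
      have "a^2 * (P z)^2 \<le> (N z)^2" for z
        using power_mono[OF aN[of z]] a P0[of z] by (simp add: power_mult_distrib)
      then show ?thesis by (simp add: distrib_left add_mono)
    qed
    have "RNJ N x y \<le> b^2 * ((P (x + y))^2 + (P (x - y))^2) / (2 * (a^2 * ((P x)^2 + (P y)^2)))"
      unfolding RNJ_def
    proof (rule frac_le)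
      show "0 \<le> b^2 * ((P (x + y))^2 + (P (x - y))^2)" by simp
      show "(N (x + y))^2 + (N (x - y))^2 \<le> b^2 * ((P (x + y))^2 + (P (x - y))^2)" by (rule num)
      show "0 < 2 * (a^2 * ((P x)^2 + (P y)^2))" using DP a by simp
      show "2 * (a^2 * ((P x)^2 + (P y)^2)) \<le> 2 * ((N x)^2 + (N y)^2)" using den by simp
    qed
    also have "\<dots> = (b/a)^2 * RNJ P x y" unfolding RNJ_def using a
      by (simp add: field_simps power2_eq_square)
    also have "\<dots> \<le> (b/a)^2" using RP by (simp add: mult_left_le)
    finally show ?thesis using r by simp
  qed
  obtain x where x: "N x > 0" using ex by blast
  have "RNJ N x x \<in> SNJ N" using x by (intro RNJ_in) simp
  then have ne: "SNJ N \<noteq> {}" by blast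
  show "CNJ N \<le> (b/a)^2" unfolding CNJ_SNJ by (rule cSup_least[OF ne main])
  show "bdd_above (SNJ N)" using main by (intro bdd_aboveI) auto
qed

lemma psi_norm_comp2:
  assumes "\<And>t. t \<in> Omega \<Longrightarrow> F t \<le> a * G t"
  shows "psi_norm F x \<le> a * psi_norm G x"
proof (cases "x = 0")
  case True then show ?thesis by (simp add: psi_norm_def)
next
  case False
  have "psi_norm F x = L1 x * F (nrm x)" using False by (simp add: psi_norm_eq)
  also have "\<dots> \<le> L1 x * (a * G (nrm x))"
    using assms[OF nrm_Omega[OF False]] L1_nonneg by (intro mult_left_mono) auto
  finally show ?thesis using False by (simp add: psi_norm_eq mult.left_commute)
qed

lemma psi_norm_pos:
  assumes "\<And>t. t \<in> Omega \<Longrightarrow> 0 < F t" "x \<noteq> 0"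
  shows "0 < psi_norm F x"
  using assms(2) L1_pos[OF assms(2)] assms(1)[OF nrm_Omega[OF assms(2)]] by (simp add: psi_norm_eq)

lemma nontriv_vec:
  assumes "\<exists>x::'a::real_normed_vector. x \<noteq> 0"
  shows "\<exists>x::'a^'n::finite. x \<noteq> 0"
proof -
  obtain e :: 'a where "e \<noteq> 0" using assms by blast
  then have "(\<chi> k. e :: 'a^'n) \<noteq> 0" by (auto simp: vec_eq_iff)
  then show ?thesis by blast
qed



context
  fixes i j :: "'n::finite" and e :: "'a::real_normed_vector"
  assumes ij: "i \<noteq> j" and U: "(UNIV :: 'n set) = {i, j}" and e1: "norm e = 1"
begin

lemma sum2: "(\<Sum>k\<in>(UNIV::'n set). f k) = f i + f j"
  using ij by (simp add: U)

lemma all2: "(\<forall>k::'n. P k) \<longleftrightarrow> P i \<and> P j"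
  using U by (metis UNIV_I insert_iff singletonD)

definition V :: "real \<Rightarrow> real \<Rightarrow> 'a^'n" where
  "V a b = (\<chi> k. if k = i then a *\<^sub>R e else b *\<^sub>R e)"

lemma Omega2: "t \<in> (Omega :: (real^'n) set) \<Longrightarrow> t$i + t$j = 1 \<and> 0 \<le> t$i \<and> 0 \<le> t$j"
proof -
  assume t: "t \<in> Omega"
  have "(\<Sum>k\<in>UNIV. t$k) = t$i + t$j" by (rule sum2)
  then show ?thesis using Omega_D[OF t] by auto
qed

lemma inner2: "(t::real^'n) \<bullet> s = t$i * s$i + t$j * s$j"
  by (simp add: inner_vec_def sum2)

lemma vec2_eq: "(x::'b^'n) = y \<longleftrightarrow> x$i = y$i \<and> x$j = y$j"
  by (simp add: vec_eq_iff all2)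

lemma V_add: "V a b + V c d = V (a + c) (b + d)"
  by (simp add: V_def vec_eq_iff scaleR_add_left)

lemma V_diff: "V a b - V c d = V (a - c) (b - d)"
  by (simp add: V_def vec_eq_iff scaleR_diff_left)

lemma L1_V: "L1 (V a b) = \<bar>a\<bar> + \<bar>b\<bar>"
  using ij by (simp add: L1_def sum2 V_def e1)

lemma V_zero: "V a b = 0 \<longleftrightarrow> a = 0 \<and> b = 0"
  using ij e1 by (auto simp: V_def vec2_eq)

lemma psi_norm_V:
  assumes t: "t \<in> Omega" and a: "\<bar>a\<bar> = t$i" and b: "\<bar>b\<bar> = t$j"
  shows "psi_norm F (V a b) = F t"
proof -
  have s: "t$i + t$j = 1" using Omega2[OF t] by simp
  have nz: "V a b \<noteq> 0" using s a b V_zero by auto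
  have "nrm (V a b) = (\<chi> k. norm (V a b $ k) / 1)" unfolding nrm_def L1_V using a b s by simp
  also have "\<dots> = t" using ij a b by (simp add: vec2_eq V_def e1)
  finally have "nrm (V a b) = t" .
  then show ?thesis using nz s by (simp add: psi_norm_eq L1_V a b)
qed

lemma psi_norm_Vi:
  assumes "F (axis i 1) = 1"
  shows "psi_norm F (V a 0) = \<bar>a\<bar>"
proof (cases "a = 0")
  case True then show ?thesis by (simp add: psi_norm_def V_zero)
next
  case False
  have "nrm (V a 0) = (\<chi> k. norm (V a 0 $ k) / \<bar>a\<bar>)" unfolding nrm_def L1_V by simp
  also have "\<dots> = axis i 1" using ij False by (simp add: vec2_eq V_def e1 axis_def)
  finally have "nrm (V a 0) = axis i 1" .
  then show ?thesis using False assms by (simp add: psi_norm_eq L1_V V_zero)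
qed

lemma psi_norm_Vj:
  assumes "F (axis j 1) = 1"
  shows "psi_norm F (V 0 b) = \<bar>b\<bar>"
proof (cases "b = 0")
  case True then show ?thesis by (simp add: psi_norm_def V_zero)
next
  case False
  have "nrm (V 0 b) = (\<chi> k. norm (V 0 b $ k) / \<bar>b\<bar>)" unfolding nrm_def L1_V by simp
  also have "\<dots> = axis j 1" using ij False by (simp add: vec2_eq V_def e1 axis_def)
  finally have "nrm (V 0 b) = axis j 1" .
  then show ?thesis using False assms by (simp add: psi_norm_eq L1_V V_zero)
qed

lemma constr1:
  assumes Fi: "F (axis i 1) = 1" and Fj: "F (axis j 1) = 1" and t: "t \<in> Omega"
  shows "RNJ (psi_norm F) (V (t$i) 0) (V 0 (t$j)) = (F t)^2 / (t \<bullet> t)"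
    "psi_norm F (V (t$i) 0) + psi_norm F (V 0 (t$j)) > 0"
proof -
  have s: "t$i + t$j = 1" "0 \<le> t$i" "0 \<le> t$j" using Omega2[OF t] by auto
  have p: "psi_norm F (V (t$i) (t$j)) = F t" "psi_norm F (V (t$i) (-t$j)) = F t"
    using psi_norm_V[OF t] s by auto
  show "RNJ (psi_norm F) (V (t$i) 0) (V 0 (t$j)) = (F t)^2 / (t \<bullet> t)"
  proof -
    have "RNJ (psi_norm F) (V (t$i) 0) (V 0 (t$j)) = (2 * (F t)^2) / (2 * (t \<bullet> t))"
      unfolding RNJ_def V_add V_diff using p s
      by (simp add: psi_norm_Vi[of F, OF Fi] psi_norm_Vj[of F, OF Fj] inner2 power2_eq_square)
    then show ?thesis by simp
  qed
  show "psi_norm F (V (t$i) 0) + psi_norm F (V 0 (t$j)) > 0"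
    using s by (simp add: psi_norm_Vi[of F, OF Fi] psi_norm_Vj[of F, OF Fj])
qed

lemma constr2:
  assumes Fi: "F (axis i 1) = 1" and Fj: "F (axis j 1) = 1" and t: "t \<in> Omega"
    and Fp: "F t > 0"
  shows "RNJ (psi_norm F) (V (t$i) (t$j)) (V (t$i) (-t$j)) = (t \<bullet> t) / (F t)^2"
    "psi_norm F (V (t$i) (t$j)) + psi_norm F (V (t$i) (-t$j)) > 0"
proof -
  have s: "t$i + t$j = 1" "0 \<le> t$i" "0 \<le> t$j" using Omega2[OF t] by auto
  have p: "psi_norm F (V (t$i) (t$j)) = F t" "psi_norm F (V (t$i) (-t$j)) = F t"
    using psi_norm_V[OF t] s by auto
  have a: "V (t$i) (t$j) + V (t$i) (-t$j) = V (2 * t$i) 0" "V (t$i) (t$j) - V (t$i) (-t$j) = V 0 (2 * t$j)"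
    unfolding V_add V_diff by simp_all
  show "RNJ (psi_norm F) (V (t$i) (t$j)) (V (t$i) (-t$j)) = (t \<bullet> t) / (F t)^2"
  proof -
    have "RNJ (psi_norm F) (V (t$i) (t$j)) (V (t$i) (-t$j)) = (4 * (t \<bullet> t)) / (4 * (F t)^2)"
      unfolding RNJ_def a p using s
      by (simp add: psi_norm_Vi[of F, OF Fi] psi_norm_Vj[of F, OF Fj] inner2 power2_eq_square algebra_simps)
    then show ?thesis by simp
  qed
  show "psi_norm F (V (t$i) (t$j)) + psi_norm F (V (t$i) (-t$j)) > 0"
    using p Fp by simp
qed


lemma norm_sq2: "(norm (t::real^'n))^2 = (t$i)^2 + (t$j)^2"
  unfolding power2_norm_eq_inner inner2 by (simp add: power2_eq_square)

lemma Omega_norm_ge: "t \<in> (Omega :: (real^'n) set) \<Longrightarrow> 1/2 \<le> (norm t)^2"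
proof -
  assume t: "t \<in> Omega"
  have s: "t$i + t$j = 1" using Omega2[OF t] by simp
  have "2 * ((t$i)^2 + (t$j)^2) = (t$i + t$j)^2 + (t$i - t$j)^2" by (simp add: power2_eq_square algebra_simps)
  then have "2 * (norm t)^2 = 1 + (t$i - t$j)^2" unfolding norm_sq2 s by simp
  moreover have "0 \<le> (t$i - t$j)^2" by simp
  ultimately show ?thesis by linarith
qed

lemma key_quad:
  fixes r2 r0 p h :: real
  assumes "(r2 * r0)^2 - p^2 \<le> h^2" "r2 * r0 \<ge> 1/2" "p \<ge> 0"
  shows "r2 * r0 - p \<le> 2 * h^2"
proof (cases "r2 * r0 - p \<le> 0")
  case True
  have "0 \<le> 2 * h^2" by simp
  then show ?thesis using True by linarith
next
  case False
  have "(r2 * r0 - p) * (r2 * r0 + p) \<le> h^2" using assms(1) by (simp add: power2_eq_square algebra_simps)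
  moreover have "(r2 * r0 - p) * (1/2) \<le> (r2 * r0 - p) * (r2 * r0 + p)"
    using False assms by (intro mult_left_mono) auto
  ultimately have "(r2 * r0 - p) / 2 \<le> h^2" by simp
  then show ?thesis by simp
qed

lemma support_line:
  assumes psi: "psi \<in> Psi" and t0: "t0 \<in> Omega" and M: "M > 0"
    and le: "\<And>t. t \<in> Omega \<Longrightarrow> psi t \<le> M * norm t"
    and eq: "psi t0 = M * norm t0"
    and pi: "t0$i > 0" and pj: "t0$j > 0" and t1: "t1 \<in> Omega"
  shows "M * (t1 \<bullet> t0) \<le> norm t0 * psi t1"
proof (rule ccontr)
  assume neg: "\<not> ?thesis"
  define r0 where "r0 = norm t0"
  have r0sq: "1/2 \<le> r0^2" using Omega_norm_ge[OF t0] by (simp add: r0_def)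
  have r0p: "r0 > 0"
  proof -
    have "r0 \<noteq> 0" using r0sq by auto
    then show ?thesis by (simp add: r0_def)
  qed
  define \<delta> where "\<delta> = M * (t1 \<bullet> t0) / r0 - psi t1"
  have dp: "\<delta> > 0" using neg r0p unfolding \<delta>_def r0_def
    by (simp add: field_simps mult.commute)
  define h where "h = min (min (t0$i) (t0$j)) (\<delta> * r0 / (4 * M))"
  have hp: "h > 0" using pi pj dp r0p M by (simp add: h_def)
  have h1: "h \<le> t0$i" "h \<le> t0$j" "h \<le> \<delta> * r0 / (4 * M)" by (simp_all add: h_def)
  define t2 where "t2 = (1 + h) *\<^sub>R t0 - h *\<^sub>R t1"
  have s0: "t0$i + t0$j = 1" "0 \<le> t0$i" "0 \<le> t0$j" using Omega2[OF t0] by auto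
  have s1: "t1$i + t1$j = 1" "0 \<le> t1$i" "0 \<le> t1$j" using Omega2[OF t1] by auto
  have t2c: "t2$i = (1 + h) * t0$i - h * t1$i" "t2$j = (1 + h) * t0$j - h * t1$j"
    by (simp_all add: t2_def)
  have t2O: "t2 \<in> Omega"
  proof -
    have "h * t1$i \<le> h" "h * t1$j \<le> h" using s1 hp by (auto intro!: mult_right_le_one_le)
    moreover have "0 \<le> h * t0$i" "0 \<le> h * t0$j" using s0 hp by auto
    ultimately have "0 \<le> t2$i" "0 \<le> t2$j" using t2c h1 by (simp_all add: algebra_simps)
    moreover note this
    moreover have "t2$i + t2$j = 1"
    proof -
      have "t2$i + t2$j = (1 + h) * (t0$i + t0$j) - h * (t1$i + t1$j)"
        using t2c by (simp add: algebra_simps)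
      then show ?thesis using s0 s1 by simp
    qed
    ultimately show ?thesis unfolding Omega_def using sum2[of "\<lambda>k. t2$k"] all2[of "\<lambda>k. 0 \<le> t2$k"] by auto
  qed
  define u where "u = h / (1 + h)"
  have u: "0 \<le> u" "u \<le> 1" using hp by (auto simp: u_def)
  have comb: "(1 - u) *\<^sub>R t2 + u *\<^sub>R t1 = t0"
  proof -
    have u1: "1 - u = 1 / (1 + h)" "u = h * (1 / (1 + h))" using hp by (auto simp: u_def field_simps)
    have "(1 - u) *\<^sub>R t2 + u *\<^sub>R t1 = (1 / (1 + h)) *\<^sub>R (t2 + h *\<^sub>R t1)"
      by (subst u1(1), subst u1(2)) (simp add: scaleR_add_right)
    also have "t2 + h *\<^sub>R t1 = (1 + h) *\<^sub>R t0" by (simp add: t2_def)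
    also have "(1 / (1 + h)) *\<^sub>R ((1 + h) *\<^sub>R t0) = t0" using hp by simp
    finally show ?thesis .
  qed
  have "psi t0 \<le> (1 - u) * psi t2 + u * psi t1"
    using convex_onD[OF Psi_D(1)[OF psi] u t2O t1] comb by simp
  moreover have "(1 - u) * psi t2 + u * psi t1 = (psi t2 + h * psi t1) / (1 + h)"
  proof -
    have hh: "1 + h \<noteq> 0" using hp by simp
    have "(1 - u) = 1 / (1 + h)" "u = h / (1 + h)" using hh by (auto simp: u_def field_simps)
    then show ?thesis using hh by (simp add: add_divide_distrib)
  qed
  ultimately have "psi t0 \<le> (psi t2 + h * psi t1) / (1 + h)" by simp
  then have cvx: "(1 + h) * psi t0 \<le> psi t2 + h * psi t1"
    using hp by (simp add: pos_le_divide_eq mult.commute)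
  have lin: "(1 + h) * (t0 \<bullet> t0) = t2 \<bullet> t0 + h * (t1 \<bullet> t0)"
    unfolding t2_def by (simp add: inner_diff_left algebra_simps)
  have t0n: "t0 \<bullet> t0 = r0^2" by (simp add: r0_def power2_norm_eq_inner)
  have e0: "psi t0 = M * (t0 \<bullet> t0) / r0" using eq r0p t0n by (simp add: r0_def power2_eq_square)
  have "(1 + h) * (M * (t0 \<bullet> t0) / r0) = M * (t2 \<bullet> t0) / r0 + h * (M * (t1 \<bullet> t0) / r0)"
  proof -
    have "(1 + h) * (M * (t0 \<bullet> t0) / r0) = M * ((1 + h) * (t0 \<bullet> t0)) / r0" by simp
    also have "\<dots> = M * (t2 \<bullet> t0 + h * (t1 \<bullet> t0)) / r0" using lin by simp
    also have "\<dots> = M * (t2 \<bullet> t0) / r0 + h * (M * (t1 \<bullet> t0) / r0)"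
      by (simp add: distrib_left add_divide_distrib)
    finally show ?thesis .
  qed
  with cvx e0 have "h * \<delta> \<le> psi t2 - M * (t2 \<bullet> t0) / r0"
    unfolding \<delta>_def by (simp add: algebra_simps)
  also have "\<dots> \<le> M * norm t2 - M * (t2 \<bullet> t0) / r0" using le[OF t2O] by simp
  also have "\<dots> = M * (norm t2 * r0 - t2 \<bullet> t0) / r0" using r0p by (simp add: field_simps)
  also have "\<dots> \<le> M * (2 * h^2) / r0"
  proof -
    have pp: "0 \<le> t2 \<bullet> t0" using inner_Omega_bounds[OF t2O t0] by simp
    have r2sq: "1/2 \<le> (norm t2)^2" using Omega_norm_ge[OF t2O] .
    have "1/4 \<le> (norm t2 * r0)^2" using mult_mono[OF r2sq r0sq] by (simp add: power_mult_distrib)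
    then have "(1/2)^2 \<le> (norm t2 * r0)^2" by (simp add: power2_eq_square)
    then have prod: "1/2 \<le> norm t2 * r0"
      by (rule power2_le_imp_le) (use r0p in simp)
    have "(norm t2 * r0)^2 - (t2 \<bullet> t0)^2 = (t2$i * t0$j - t2$j * t0$i)^2"
      unfolding power_mult_distrib norm_sq2 r0_def inner2 by (simp add: power2_eq_square algebra_simps)
    also have "t2$i * t0$j - t2$j * t0$i = h * (t1$j * t0$i - t1$i * t0$j)"
      unfolding t2c by (simp add: algebra_simps)
    also have "(h * (t1$j * t0$i - t1$i * t0$j))^2 \<le> h^2 * 1"
    proof -
      have b: "\<bar>t1$j * t0$i - t1$i * t0$j\<bar> \<le> 1"
      proof -
        have "0 \<le> t1$j * t0$i" "t1$j * t0$i \<le> 1" "0 \<le> t1$i * t0$j" "t1$i * t0$j \<le> 1"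
          using s0 s1 by (auto intro!: mult_le_one)
        then show ?thesis by linarith
      qed
      have "(t1$j * t0$i - t1$i * t0$j)^2 \<le> 1"
        using power_mono[OF b abs_ge_zero, of 2] by simp
      then show ?thesis using mult_left_mono[of _ 1 "h^2"] by (simp add: power_mult_distrib)
    qed
    finally have "norm t2 * r0 - t2 \<bullet> t0 \<le> 2 * h^2" using key_quad prod pp by simp
    then show ?thesis using M r0p by (intro divide_right_mono mult_left_mono) auto
  qed
  finally have "h * \<delta> \<le> M * (2 * h^2) / r0" .
  also have "M * (2 * h^2) / r0 = h * (2 * M * h / r0)" by (simp add: power2_eq_square)
  finally have "\<delta> \<le> 2 * M * h / r0" using hp mult_le_cancel_left_pos by blast
  also have "\<dots> \<le> 2 * M * (\<delta> * r0 / (4 * M)) / r0"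
    using h1(3) M r0p by (intro divide_right_mono mult_left_mono) auto
  also have "\<dots> = \<delta> / 2" using M r0p by (simp add: field_simps)
  finally show False using dp by simp
qed

end



lemma sup_sq:
  fixes f :: "'b \<Rightarrow> real"
  assumes "\<And>t. t \<in> S \<Longrightarrow> (f t)^2 \<le> C" "S \<noteq> {}" "\<And>t. t \<in> S \<Longrightarrow> f t \<ge> 0"
  shows "(SUP t\<in>S. f t)^2 \<le> C"
proof -
  obtain t0 where t0: "t0 \<in> S" using assms(2) by blast
  have C0: "0 \<le> C" using assms(1)[OF t0] by (smt (verit) zero_le_power2)
  have le: "(SUP t\<in>S. f t) \<le> sqrt C"
    by (rule cSUP_least[OF assms(2)]) (use assms(1) real_le_rsqrt in blast)
  have bdd: "bdd_above (f ` S)" using assms(1) real_le_rsqrt by (intro bdd_aboveI2) blast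
  have ge: "0 \<le> (SUP t\<in>S. f t)" using cSUP_upper[OF t0 bdd] assms(3)[OF t0] by linarith
  have "(SUP t\<in>S. f t)^2 \<le> (sqrt C)^2" by (rule power_mono[OF le ge])
  then show ?thesis using C0 by simp
qed

lemma inf_sq:
  fixes f :: "'b \<Rightarrow> real"
  assumes "\<And>t. t \<in> S \<Longrightarrow> (1 / f t)^2 \<le> C" "S \<noteq> {}" "\<And>t. t \<in> S \<Longrightarrow> f t > 0"
    and mpos: "(INF t\<in>S. f t) > 0"
  shows "1 / (INF t\<in>S. f t)^2 \<le> C"
proof -
  obtain t0 where t0: "t0 \<in> S" using assms(2) by blast
  have Cp: "0 < C" using assms(1)[OF t0] assms(3)[OF t0]
    by (smt (verit) zero_less_divide_1_iff zero_less_power2)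
  have "1 / sqrt C \<le> f t" if t: "t \<in> S" for t
  proof -
    have "1 / f t \<le> sqrt C" using real_le_rsqrt[OF assms(1)[OF t]] .
    then show ?thesis using assms(3)[OF t] Cp by (simp add: field_simps)
  qed
  then have "1 / sqrt C \<le> (INF t\<in>S. f t)" by (intro cINF_greatest[OF assms(2)])
  then have "1 / (INF t\<in>S. f t) \<le> sqrt C" using mpos Cp by (simp add: field_simps)
  then have "(1 / (INF t\<in>S. f t))^2 \<le> (sqrt C)^2"
    by (rule power_mono) (use mpos in simp)
  then show ?thesis using Cp by (simp add: power_divide)
qed

theorem corollary6p3:
  fixes psi phi :: "(real^'n::finite) \<Rightarrow> real"
  assumes n2: "CARD('n) \<ge> 2"
    and nontriv: "\<exists>x::'a::real_normed_vector. x \<noteq> 0"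
    and psi: "psi \<in> Psi" and phi: "phi \<in> Psi"
    and CNJ_phi: "CNJ (psi_norm phi :: 'a^'n \<Rightarrow> real) = 1"
    and CNJ_phistar: "CNJ (psi_norm (psi_star phi) :: 'a^'n \<Rightarrow> real) = 1"
  defines "m \<equiv> (INF t\<in>Omega. psi t / phi t)"
    and "M \<equiv> (SUP t\<in>Omega. psi t / phi t)"
  shows "((\<forall>t\<in>Omega. phi t \<le> psi t) \<longrightarrow>
            CNJ (psi_norm psi :: 'a^'n \<Rightarrow> real) \<le> M^2 \<and>
            CNJ (psi_norm (psi_star psi) :: 'a^'n \<Rightarrow> real) \<le> M^2)
       \<and> ((\<forall>t\<in>Omega. psi t \<le> phi t) \<longrightarrow>
            CNJ (psi_norm psi :: 'a^'n \<Rightarrow> real) \<le> 1 / m^2 \<and>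
            CNJ (psi_norm (psi_star psi) :: 'a^'n \<Rightarrow> real) \<le> 1 / m^2)
       \<and> (CARD('n) = 2 \<longrightarrow>
            ((\<forall>t\<in>Omega. phi t \<le> psi t) \<longrightarrow>
               CNJ (psi_norm psi :: 'a^'n \<Rightarrow> real) = M^2 \<and>
               CNJ (psi_norm (psi_star psi) :: 'a^'n \<Rightarrow> real) = M^2)
          \<and> ((\<forall>t\<in>Omega. psi t \<le> phi t) \<longrightarrow>
               CNJ (psi_norm psi :: 'a^'n \<Rightarrow> real) = 1 / m^2 \<and>
               CNJ (psi_norm (psi_star psi) :: 'a^'n \<Rightarrow> real) = 1 / m^2))"
proof -
  define c0 where "c0 = 1 / real CARD('n)"
  have c0p: "c0 > 0" by (simp add: c0_def)
  have nc0: "real CARD('n) = 1 / c0" by (simp add: c0_def)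
  have Fb: "c0 \<le> F t \<and> F t \<le> 1" if "F \<in> Psi" "t \<in> Omega" for F :: "real^'n \<Rightarrow> real" and t
    using Psi_pos[OF that] Psi_le1[OF that] by (simp add: c0_def)
  have Fsb: "c0 \<le> psi_star F t \<and> psi_star F t \<le> real CARD('n)" if "F \<in> Psi" "t \<in> Omega" for F :: "real^'n \<Rightarrow> real" and t
    using psi_star_bounds[OF that] by (simp add: c0_def)
  define P :: "'a^'n \<Rightarrow> real" where "P = psi_norm phi"
  define Ps :: "'a^'n \<Rightarrow> real" where "Ps = psi_norm (psi_star phi)"
  define N :: "'a^'n \<Rightarrow> real" where "N = psi_norm psi"
  define Ns :: "'a^'n \<Rightarrow> real" where "Ns = psi_norm (psi_star psi)"
  have P_L1: "c0 * L1 x \<le> P x" "P x \<le> 1 * L1 x" for x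
    unfolding P_def using psi_norm_L1[where F=phi and c=c0 and B=1 and x=x] Fb[OF phi] by auto
  have Ps_L1: "c0 * L1 x \<le> Ps x" "Ps x \<le> real CARD('n) * L1 x" for x
    unfolding Ps_def using psi_norm_L1[where F="psi_star phi" and c=c0 and B="real CARD('n)" and x=x] Fsb[OF phi] by auto
  have bddP: "bdd_above (SNJ P)" by (rule SNJ_bdd_L1[OF c0p _ P_L1]) simp
  have bddPs: "bdd_above (SNJ Ps)" by (rule SNJ_bdd_L1[OF c0p _ Ps_L1]) simp
  have P0: "0 \<le> P x" for x using P_L1(1)[of x] L1_nonneg[of x] c0p by (smt (verit) mult_nonneg_nonneg)
  have Ps0: "0 \<le> Ps x" for x using Ps_L1(1)[of x] L1_nonneg[of x] c0p by (smt (verit) mult_nonneg_nonneg)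
  obtain x0 :: "'a^'n" where x0: "x0 \<noteq> 0" using nontriv_vec[OF nontriv] by blast
  have exN: "\<exists>x. N x > 0" unfolding N_def using psi_norm_pos[OF _ x0, of psi] Psi_pos[OF psi] by blast
  have exNs: "\<exists>x. Ns x > 0" unfolding Ns_def
    using psi_norm_pos[OF _ x0, of "psi_star psi"] Fsb[OF psi] c0p by force
  have CP: "CNJ P = 1" using CNJ_phi by (simp add: P_def)
  have CPs: "CNJ Ps = 1" using CNJ_phistar by (simp add: Ps_def)
  define r where "r t = psi t / phi t" for t
  have rb: "c0 \<le> r t \<and> r t \<le> 1 / c0" if t: "t \<in> Omega" for t
  proof -
    have a: "c0 \<le> psi t" "psi t \<le> 1" "c0 \<le> phi t" "phi t \<le> 1" using Fb[OF psi t] Fb[OF phi t] by auto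
    have "c0 \<le> psi t / phi t" using a c0p by (simp add: le_divide_eq) (smt (verit) mult_left_le)
    moreover have "psi t / phi t \<le> 1 / c0"
    proof -
      have "c0 * psi t \<le> c0 * 1" using a c0p by (intro mult_left_mono) auto
      then have "c0 * psi t \<le> phi t" using a by linarith
      then have "psi t \<le> phi t / c0" using c0p by (simp add: le_divide_eq mult.commute)
      then have "psi t / phi t \<le> (phi t / c0) / phi t" using a c0p by (intro divide_right_mono) auto
      then show ?thesis using a c0p by simp
    qed
    ultimately show ?thesis by (simp add: r_def)
  qed
  have Mdef: "M = (SUP t\<in>Omega. r t)" by (simp add: M_def r_def)
  have mdef: "m = (INF t\<in>Omega. r t)" by (simp add: m_def r_def)
  have Ome: "Omega \<noteq> {}" using axis_Omega by blast
  have bddr: "bdd_above (r ` Omega)" using rb by (intro bdd_aboveI2) blast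
  have bddr': "bdd_below (r ` Omega)" using rb by (intro bdd_belowI2) blast
  have M_ge: "r t \<le> M" if "t \<in> Omega" for t unfolding Mdef by (rule cSUP_upper[OF that bddr])
  have m_le: "m \<le> r t" if "t \<in> Omega" for t unfolding mdef by (rule cINF_lower[OF bddr' that])
  have m_ge: "c0 \<le> m" unfolding mdef by (rule cINF_greatest[OF Ome]) (use rb in blast)
  have mp: "m > 0" using m_ge c0p by simp
  have Mp: "M > 0" using M_ge[OF axis_Omega[of undefined]] rb[OF axis_Omega[of undefined]] c0p by linarith
  have phip: "phi t > 0" if "t \<in> Omega" for t using Psi_pos[OF phi that] by simp
  have psip: "psi t > 0" if "t \<in> Omega" for t using Psi_pos[OF psi that] by simp
  have psiM: "psi t \<le> M * phi t" if t: "t \<in> Omega" for t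
    using M_ge[OF t] phip[OF t] by (simp add: r_def divide_le_eq)
  have psim: "m * phi t \<le> psi t" if t: "t \<in> Omega" for t
    using m_le[OF t] phip[OF t] by (simp add: r_def le_divide_eq)

  have partI: "CNJ N \<le> M^2 \<and> CNJ Ns \<le> M^2 \<and> bdd_above (SNJ N) \<and> bdd_above (SNJ Ns)"
    if A: "\<forall>t\<in>Omega. phi t \<le> psi t"
  proof -
    have aN: "1 * P x \<le> N x" for x unfolding P_def N_def by (rule psi_norm_comp) (use A in simp)
    have bN: "N x \<le> M * P x" for x unfolding P_def N_def by (rule psi_norm_comp2) (use psiM in simp)
    have r1: "CNJ N \<le> (M/1)^2" "bdd_above (SNJ N)"
      using CNJ_upper[OF P0 aN bN _ CP bddP exN] by auto
    have s1: "1 * psi_star psi s \<le> psi_star phi s" if s: "s \<in> Omega" for s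
      by (rule psi_star_mono[OF psi phi s]) (use A in auto)
    have s2: "(1/M) * psi_star phi s \<le> psi_star psi s" if s: "s \<in> Omega" for s
      by (rule psi_star_mono[OF phi psi s]) (use psiM Mp phip in \<open>auto simp: field_simps\<close>)
    have aNs: "(1/M) * Ps x \<le> Ns x" for x unfolding Ps_def Ns_def by (rule psi_norm_comp) (use s2 in simp)
    have bNs: "Ns x \<le> 1 * Ps x" for x unfolding Ps_def Ns_def by (rule psi_norm_comp2) (use s1 in simp)
    have r2: "CNJ Ns \<le> (1/(1/M))^2" "bdd_above (SNJ Ns)"
      using CNJ_upper[OF Ps0 aNs bNs _ CPs bddPs exNs] Mp by auto
    show ?thesis using r1 r2 by simp
  qed
  have partII: "CNJ N \<le> 1 / m^2 \<and> CNJ Ns \<le> 1 / m^2 \<and> bdd_above (SNJ N) \<and> bdd_above (SNJ Ns)"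
    if B: "\<forall>t\<in>Omega. psi t \<le> phi t"
  proof -
    have aN: "m * P x \<le> N x" for x unfolding P_def N_def by (rule psi_norm_comp) (use psim in simp)
    have bN: "N x \<le> 1 * P x" for x unfolding P_def N_def by (rule psi_norm_comp2) (use B in simp)
    have r1: "CNJ N \<le> (1/m)^2" "bdd_above (SNJ N)"
      using CNJ_upper[OF P0 aN bN mp CP bddP exN] by auto
    have s1: "m * psi_star psi s \<le> psi_star phi s" if s: "s \<in> Omega" for s
      by (rule psi_star_mono[OF psi phi s mp]) (use psim in auto)
    have s2: "1 * psi_star phi s \<le> psi_star psi s" if s: "s \<in> Omega" for s
      by (rule psi_star_mono[OF phi psi s]) (use B in auto)
    have aNs: "1 * Ps x \<le> Ns x" for x unfolding Ps_def Ns_def by (rule psi_norm_comp) (use s2 in simp)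
    have bNs: "Ns x \<le> (1/m) * Ps x" for x unfolding Ps_def Ns_def
      by (rule psi_norm_comp2) (use s1 mp in \<open>simp add: field_simps mult.commute\<close>)
    have r2: "CNJ Ns \<le> ((1/m)/1)^2" "bdd_above (SNJ Ns)"
      using CNJ_upper[OF Ps0 aNs bNs _ CPs bddPs exNs] by auto
    show ?thesis using r1 r2 by (simp add: power_divide)
  qed
  have partIII: "CARD('n) = 2 \<longrightarrow>
            ((\<forall>t\<in>Omega. phi t \<le> psi t) \<longrightarrow> CNJ N = M^2 \<and> CNJ Ns = M^2)
          \<and> ((\<forall>t\<in>Omega. psi t \<le> phi t) \<longrightarrow> CNJ N = 1 / m^2 \<and> CNJ Ns = 1 / m^2)"
  proof
    assume c2: "CARD('n) = 2"
    obtain i j :: 'n where ij: "i \<noteq> j" and U: "(UNIV :: 'n set) = {i, j}"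
      using c2 card_2_iff[of "UNIV :: 'n set"] by auto
    obtain e0 :: 'a where e0: "e0 \<noteq> 0" using nontriv by blast
    define e where "e = e0 /\<^sub>R norm e0"
    have e1: "norm e = 1" using e0 by (simp add: e_def)
    note c1 = constr1[OF ij U e1]
    note c2' = constr2[OF ij U e1]
    have psi_ax: "psi (axis k 1) = 1" for k using Psi_D(3)[OF psi] .
    have phi_ax: "phi (axis k 1) = 1" for k using Psi_D(3)[OF phi] .
    have psis_ax: "psi_star psi (axis k 1) = 1" for k using psi_star_axis[OF psi] .
    have tt: "t \<bullet> t = (norm t)^2" for t :: "real^'n" by (simp add: power2_norm_eq_inner)
    have ttp: "t \<bullet> t > 0" if "t \<in> Omega" for t :: "real^'n"
    proof -
      have "0 < (norm t)^2" using Omega_norm_ge[OF ij U e1 that] by linarith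
      then show ?thesis using tt[of t] by simp
    qed
    have phin: "phi t = norm t" if t: "t \<in> Omega" for t
    proof -
      have "RNJ P (V i e (t$i) 0) (V i e 0 (t$j)) \<le> CNJ P"
        unfolding P_def by (rule RNJ_le_CNJ[OF bddP[unfolded P_def] c1(2)[where F=phi, OF phi_ax phi_ax t]])
      then have a: "(phi t)^2 / (t \<bullet> t) \<le> 1" unfolding P_def c1(1)[where F=phi, OF phi_ax phi_ax t] CP[unfolded P_def] .
      have "RNJ P (V i e (t$i) (t$j)) (V i e (t$i) (-t$j)) \<le> CNJ P"
        unfolding P_def by (rule RNJ_le_CNJ[OF bddP[unfolded P_def] c2'(2)[where F=phi, OF phi_ax phi_ax t phip[OF t]]])
      then have b: "(t \<bullet> t) / (phi t)^2 \<le> 1" unfolding P_def c2'(1)[where F=phi, OF phi_ax phi_ax t phip[OF t]] CP[unfolded P_def] .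
      have "(phi t)^2 \<le> t \<bullet> t" using a ttp[OF t] by (simp add: divide_le_eq)
      moreover have "t \<bullet> t \<le> (phi t)^2" using b phip[OF t] by (simp add: divide_le_eq)
      ultimately have "(phi t)^2 = (norm t)^2" using tt[of t] by simp
      then have "phi t = norm t \<or> phi t = - norm t" by (simp add: power2_eq_iff)
      moreover have "0 \<le> norm t" by simp
      ultimately show ?thesis using phip[OF t] by linarith
    qed
    have rn: "r t = psi t / norm t" if "t \<in> Omega" for t using phin[OF that] by (simp add: r_def)
    show "((\<forall>t\<in>Omega. phi t \<le> psi t) \<longrightarrow> CNJ N = M^2 \<and> CNJ Ns = M^2)
          \<and> ((\<forall>t\<in>Omega. psi t \<le> phi t) \<longrightarrow> CNJ N = 1 / m^2 \<and> CNJ Ns = 1 / m^2)"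
    proof (intro conjI impI)
      assume A: "\<forall>t\<in>Omega. phi t \<le> psi t"
      note pI = partI[OF A]
      show "CNJ N = M^2"
      proof (rule antisym)
        show "CNJ N \<le> M^2" using pI by simp
        have "(r t)^2 \<le> CNJ N" if t: "t \<in> Omega" for t
        proof -
          have "RNJ N (V i e (t$i) 0) (V i e 0 (t$j)) \<le> CNJ N"
            unfolding N_def by (rule RNJ_le_CNJ[OF pI[unfolded N_def, THEN conjunct2, THEN conjunct2, THEN conjunct1] c1(2)[where F=psi, OF psi_ax psi_ax t]])
          then show ?thesis unfolding N_def c1(1)[where F=psi, OF psi_ax psi_ax t] rn[OF t] tt
            by (simp add: power_divide)
        qed
        then show "M^2 \<le> CNJ N" unfolding Mdef
          by (rule sup_sq[OF _ Ome]) (use rb c0p in \<open>auto intro: less_imp_le order_trans\<close>)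
      qed
      show "CNJ Ns = M^2"
      proof (rule antisym)
        show "CNJ Ns \<le> M^2" using pI by simp
        have cont: "continuous_on Omega (\<lambda>t. psi t / phi t)"
          by (intro continuous_on_divide Psi_D(2)[OF psi] Psi_D(2)[OF phi]) (use phip in force)
        obtain t0 where t0O: "t0 \<in> Omega" and t0max: "\<forall>y\<in>Omega. psi y / phi y \<le> psi t0 / phi t0"
          using continuous_attains_sup[OF Omega_compact Ome cont] by blast
        have Mt0: "M = r t0"
        proof (rule antisym)
          show "r t0 \<le> M" by (rule M_ge[OF t0O])
          show "M \<le> r t0" unfolding Mdef by (rule cSUP_least[OF Ome]) (use t0max in \<open>simp add: r_def\<close>)
        qed
        have n0: "norm t0 > 0" using phin[OF t0O] phip[OF t0O] by simp
        have le_all: "psi t \<le> M * norm t" if "t \<in> Omega" for t using psiM[OF that] phin[OF that] by simp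
        have eq0: "psi t0 = M * norm t0" using Mt0 rn[OF t0O] n0 by simp
        have star: "psi_star psi t0 \<le> norm t0 / M"
        proof (cases "t0$i > 0 \<and> t0$j > 0")
          case True
          show ?thesis
          proof (rule psi_star_le[OF psi t0O])
            fix t :: "real^'n" assume t: "t \<in> Omega"
            have sl: "M * (t \<bullet> t0) \<le> norm t0 * psi t"
              by (rule support_line[OF ij U e1 psi t0O Mp le_all eq0 _ _ t]) (use True in auto)
            then have "t \<bullet> t0 \<le> (norm t0 * psi t) / M" using Mp by (simp add: pos_le_divide_eq mult.commute)
            also have "\<dots> = (norm t0 / M) * psi t" by simp
            finally show "(t \<bullet> t0) / psi t \<le> norm t0 / M" using psip[OF t] by (simp add: pos_divide_le_eq)
          qed
        next
          case False
          have s0: "t0$i + t0$j = 1" "0 \<le> t0$i" "0 \<le> t0$j" using Omega2[OF ij U e1 t0O] by auto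
          have "\<exists>k. t0 = axis k 1"
          proof (cases "t0$i = 0")
            case True
            then have "t0$j = 1" using s0 by simp
            then show ?thesis using Omega_one[OF t0O] by blast
          next
            case False
            then have "t0$j = 0" using \<open>\<not> (t0$i > 0 \<and> t0$j > 0)\<close> s0 by auto
            then have "t0$i = 1" using s0 by simp
            then show ?thesis using Omega_one[OF t0O] by blast
          qed
          then obtain k where k: "t0 = axis k 1" by blast
          have "M = 1" using Mt0 k psi_ax phi_ax by (simp add: r_def)
          then show ?thesis using k psis_ax by simp
        qed
        have sp: "0 < psi_star psi t0" using Fsb[OF psi t0O] c0p by linarith
        have "RNJ Ns (V i e (t0$i) (t0$j)) (V i e (t0$i) (-t0$j)) \<le> CNJ Ns"
          unfolding Ns_def by (rule RNJ_le_CNJ[OF pI[unfolded Ns_def, THEN conjunct2, THEN conjunct2, THEN conjunct2]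
              c2'(2)[where F="psi_star psi", OF psis_ax psis_ax t0O sp]])
        then have R: "(t0 \<bullet> t0) / (psi_star psi t0)^2 \<le> CNJ Ns"
          unfolding Ns_def c2'(1)[where F="psi_star psi", OF psis_ax psis_ax t0O sp] .
        have "M^2 = (t0 \<bullet> t0) / (norm t0 / M)^2" using n0 Mp by (simp add: tt power_divide)
        also have "\<dots> \<le> (t0 \<bullet> t0) / (psi_star psi t0)^2"
        proof (rule divide_left_mono)
          show "(psi_star psi t0)^2 \<le> (norm t0 / M)^2" using star sp by (intro power_mono) auto
          show "0 \<le> t0 \<bullet> t0" by simp
          show "0 < (norm t0 / M)^2 * (psi_star psi t0)^2" using n0 Mp sp by simp
        qed
        finally show "M^2 \<le> CNJ Ns" using R by linarith
      qed
    next
      assume B: "\<forall>t\<in>Omega. psi t \<le> phi t"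
      note pII = partII[OF B]
      have rp: "0 < r t" if "t \<in> Omega" for t using rb[OF that] c0p by linarith
      have mp': "0 < (INF t\<in>Omega. r t)" using mp mdef by simp
      have inv: "(1 / r t)^2 = (t \<bullet> t) / (psi t)^2" if t: "t \<in> Omega" for t
        unfolding rn[OF t] tt by (simp add: power_divide)
      show "CNJ N = 1 / m^2"
      proof (rule antisym)
        show "CNJ N \<le> 1 / m^2" using pII by simp
        have "(1 / r t)^2 \<le> CNJ N" if t: "t \<in> Omega" for t
        proof -
          have "RNJ N (V i e (t$i) (t$j)) (V i e (t$i) (-t$j)) \<le> CNJ N"
            unfolding N_def by (rule RNJ_le_CNJ[OF pII[unfolded N_def, THEN conjunct2, THEN conjunct2, THEN conjunct1]
                c2'(2)[where F=psi, OF psi_ax psi_ax t psip[OF t]]])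
          then show ?thesis unfolding N_def c2'(1)[where F=psi, OF psi_ax psi_ax t psip[OF t]] inv[OF t] .
        qed
        then show "1 / m^2 \<le> CNJ N" unfolding mdef
          by (rule inf_sq[OF _ Ome rp mp'])
      qed
      show "CNJ Ns = 1 / m^2"
      proof (rule antisym)
        show "CNJ Ns \<le> 1 / m^2" using pII by simp
        have "(1 / r t)^2 \<le> CNJ Ns" if t: "t \<in> Omega" for t
        proof -
          have "RNJ Ns (V i e (t$i) 0) (V i e 0 (t$j)) \<le> CNJ Ns"
            unfolding Ns_def by (rule RNJ_le_CNJ[OF pII[unfolded Ns_def, THEN conjunct2, THEN conjunct2, THEN conjunct2]
                c1(2)[where F="psi_star psi", OF psis_ax psis_ax t]])
          then have R: "(psi_star psi t)^2 / (t \<bullet> t) \<le> CNJ Ns"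
            unfolding Ns_def c1(1)[where F="psi_star psi", OF psis_ax psis_ax t] .
          have g: "(t \<bullet> t) / psi t \<le> psi_star psi t" by (rule psi_star_ge[OF psi t t])
          have tp: "0 < t \<bullet> t" using ttp[OF t] .
          have ps: "0 < psi t" using psip[OF t] .
          have "(t \<bullet> t) / (psi t)^2 = ((t \<bullet> t) / psi t)^2 / (t \<bullet> t)"
            using tp ps by (simp add: power2_eq_square field_simps)
          also have "\<dots> \<le> (psi_star psi t)^2 / (t \<bullet> t)"
            using g tp ps by (intro divide_right_mono power_mono) auto
          finally show ?thesis using R inv[OF t] by linarith
        qed
        then show "1 / m^2 \<le> CNJ Ns" unfolding mdef
          by (rule inf_sq[OF _ Ome rp mp'])
      qed
    qed
  qed
  show ?thesis using partI partII partIII unfolding N_def Ns_def by blast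
qed

end
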